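(* Let $X,X_1,X_2,\dots$ be i.i.d. nonnegative random variables with $\mathbb{E}[X]>0$ and $\mathbb{E}[X^2]<\infty$, and let $N_X(x)=\max\{k\ge0:\sum_{n=1}^kX_n\le x\}$ for $x\in\mathbb{R}$. Then for every $\delta>0$ there exist finite constants $\widetilde C=\widetilde C(\delta)>0$ and $\tilde c=\tilde c(\delta)>0$ such that $$\mathbb{P}\Big(N_X(x)-\frac{x}{\mathbb{E}[X]}>u\Big)\le\widetilde C\exp\{-\tilde c\,u^2/x\}\qquad\text{for all }x\ge0,\ 0\le u\le\delta x.$$ *)

theory Defs
  imports "HOL-Probability.Probability"
begin

text \<open>Renewal counting function N_X(x) = max{k >= 0 : X_1 + ... + X_k <= x},
  where the sequence X_1, X_2, ... is represented by X 0, X 1, ...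
  Valued in enat: it is infinite if the set of such k is unbounded
  (and 0 if the set is empty, which happens only for x < 0).\<close>
definition renewal_count :: "(nat \<Rightarrow> 'a \<Rightarrow> real) \<Rightarrow> real \<Rightarrow> 'a \<Rightarrow> enat" where
  "renewal_count X x \<omega> = (SUP k\<in>{k::nat. (\<Sum>n<k. X n \<omega>) \<le> x}. enat k)"

end

theory Submission imports Defs begin

lemma exp_neg_bound:
  fixes y :: real assumes "y \<ge> 0"
  shows "exp (-y) \<le> 1 - y + y\<^sup>2/2"
proof -
  define f where "f y = 1 - y + y\<^sup>2/2 - exp (-y)" for y :: real
  have d: "\<And>z. (f has_real_derivative (-1 + z + exp (-z))) (at z)"
    unfolding f_def by (auto intro!: derivative_eq_intros simp: power2_eq_square)
  have "f 0 \<le> f y"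
  proof (rule DERIV_nonneg_imp_nondecreasing[OF assms])
    fix z assume "0 \<le> z" "z \<le> y"
    show "\<exists>D. (f has_real_derivative D) (at z) \<and> 0 \<le> D"
      using d exp_ge_add_one_self[of "-z"] by fastforce
  qed
  then show ?thesis by (simp add: f_def)
qed

lemma chernoff:
  fixes M :: "'a measure" and X :: "nat \<Rightarrow> 'a \<Rightarrow> real"
  assumes P: "prob_space M"
    and meas: "\<And>n. X n \<in> borel_measurable M"
    and indep: "prob_space.indep_vars M (\<lambda>_. borel) X UNIV"
    and ident: "\<And>n. distr M borel (X n) = distr M borel (X 0)"
    and nonneg: "\<And>n \<omega>. \<omega> \<in> space M \<Longrightarrow> X n \<omega> \<ge> 0"
    and second_moment: "integrable M (\<lambda>\<omega>. (X 0 \<omega>)\<^sup>2)"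
    and t: "t \<ge> 0"
  shows "measure M {\<omega> \<in> space M. (\<Sum>n<k. X n \<omega>) \<le> x}
      \<le> exp (t * x + real k * (- t * integral\<^sup>L M (X 0) + t\<^sup>2 * (integral\<^sup>L M (\<lambda>\<omega>. (X 0 \<omega>)\<^sup>2) + 1) / 2))"
proof -
  interpret prob_space M by fact
  define \<mu> where "\<mu> = integral\<^sup>L M (X 0)"
  define m where "m = integral\<^sup>L M (\<lambda>\<omega>. (X 0 \<omega>)\<^sup>2) + 1"
  note [measurable] = meas
  have intX0: "integrable M (X 0)"
    by (rule square_integrable_imp_integrable[OF meas second_moment])
  have bnd: "\<And>n. integrable M (\<lambda>\<omega>. exp (- t * X n \<omega>))"
  proof -
    fix n
    show "integrable M (\<lambda>\<omega>. exp (- t * X n \<omega>))"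
      by (rule integrable_const_bound[where B=1]) (use t nonneg in auto)
  qed
  have mgf0: "integral\<^sup>L M (\<lambda>\<omega>. exp (- t * X 0 \<omega>)) \<le> exp (- t * \<mu> + t\<^sup>2 * m / 2)"
  proof -
    have "integral\<^sup>L M (\<lambda>\<omega>. exp (- t * X 0 \<omega>)) \<le> integral\<^sup>L M (\<lambda>\<omega>. 1 - t * X 0 \<omega> + t\<^sup>2/2 * (X 0 \<omega>)\<^sup>2)"
    proof (rule integral_mono)
      show "integrable M (\<lambda>\<omega>. 1 - t * X 0 \<omega> + t\<^sup>2/2 * (X 0 \<omega>)\<^sup>2)"
        using intX0 second_moment by auto
      fix \<omega> assume "\<omega> \<in> space M"
      then have "exp (-(t * X 0 \<omega>)) \<le> 1 - t * X 0 \<omega> + (t * X 0 \<omega>)\<^sup>2/2"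
        using t nonneg by (intro exp_neg_bound) auto
      then show "exp (- t * X 0 \<omega>) \<le> 1 - t * X 0 \<omega> + t\<^sup>2/2 * (X 0 \<omega>)\<^sup>2"
        by (simp add: power_mult_distrib)
    qed (use bnd in auto)
    also have "\<dots> = 1 - t * \<mu> + t\<^sup>2/2 * (m - 1)"
      using intX0 second_moment by (simp add: \<mu>_def m_def prob_space)
    also have "\<dots> \<le> 1 + (- t * \<mu> + t\<^sup>2 * m / 2)"
      by (simp add: algebra_simps)
    also have "\<dots> \<le> exp (- t * \<mu> + t\<^sup>2 * m / 2)"
      by (rule exp_ge_add_one_self)
    finally show ?thesis .
  qed
  have mgfn: "\<And>n. integral\<^sup>L M (\<lambda>\<omega>. exp (- t * X n \<omega>)) = integral\<^sup>L M (\<lambda>\<omega>. exp (- t * X 0 \<omega>))"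
  proof -
    fix n
    have "integral\<^sup>L M (\<lambda>\<omega>. exp (- t * X n \<omega>)) = integral\<^sup>L (distr M borel (X n)) (\<lambda>y. exp (- t * y))"
      by (subst integral_distr) auto
    also have "\<dots> = integral\<^sup>L (distr M borel (X 0)) (\<lambda>y. exp (- t * y))"
      using ident[of n] by simp
    also have "\<dots> = integral\<^sup>L M (\<lambda>\<omega>. exp (- t * X 0 \<omega>))"
      by (subst integral_distr) auto
    finally show "?thesis n" .
  qed
  have ind2: "indep_vars (\<lambda>_. borel) (\<lambda>i \<omega>. exp (- t * X i \<omega>)) {..<k}"
    by (rule indep_vars_compose2[where X=X and M'="\<lambda>_. borel"])
       (auto intro: indep_vars_subset[OF indep])
  have prodeq: "integral\<^sup>L M (\<lambda>\<omega>. \<Prod>i<k. exp (- t * X i \<omega>)) = (\<Prod>i<k. integral\<^sup>L M (\<lambda>\<omega>. exp (- t * X i \<omega>)))"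
    by (rule indep_vars_lebesgue_integral[OF _ ind2]) (use bnd[simplified] in simp_all)
  have prodint: "integrable M (\<lambda>\<omega>. \<Prod>i<k. exp (- t * X i \<omega>))"
    by (rule indep_vars_integrable[OF _ ind2]) (use bnd[simplified] in simp_all)
  let ?A = "{\<omega> \<in> space M. (\<Sum>n<k. X n \<omega>) \<le> x}"
  have Am: "?A \<in> sets M" by measurable
  have "measure M ?A = integral\<^sup>L M (indicator ?A)"
    using Am by simp
  also have "\<dots> \<le> integral\<^sup>L M (\<lambda>\<omega>. exp (t * x) * (\<Prod>i<k. exp (- t * X i \<omega>)))"
  proof (rule integral_mono)
    show "integrable M (indicator ?A :: 'a \<Rightarrow> real)"
      by (rule integrable_const_bound[where B=1]) (use Am in auto)
    show "integrable M (\<lambda>\<omega>. exp (t * x) * (\<Prod>i<k. exp (- t * X i \<omega>)))"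
      using prodint by simp
    fix \<omega> assume "\<omega> \<in> space M"
    have "(\<Prod>i<k. exp (- t * X i \<omega>)) = exp (- t * (\<Sum>i<k. X i \<omega>))"
      by (simp add: exp_sum[symmetric] sum_distrib_left)
    then have eq: "exp (t * x) * (\<Prod>i<k. exp (- t * X i \<omega>)) = exp (t * (x - (\<Sum>i<k. X i \<omega>)))"
      by (simp add: exp_add[symmetric] algebra_simps)
    show "indicator ?A \<omega> \<le> exp (t * x) * (\<Prod>i<k. exp (- t * X i \<omega>))"
      unfolding eq using t \<open>\<omega> \<in> space M\<close>
      by (auto simp: indicator_def intro: mult_nonneg_nonneg)
  qed
  also have "\<dots> = exp (t * x) * (\<Prod>i<k. integral\<^sup>L M (\<lambda>\<omega>. exp (- t * X i \<omega>)))"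
    using prodeq by simp
  also have "\<dots> = exp (t * x) * (integral\<^sup>L M (\<lambda>\<omega>. exp (- t * X 0 \<omega>))) ^ k"
    by (subst prod.cong[OF refl mgfn]) simp
  also have "\<dots> \<le> exp (t * x) * (exp (- t * \<mu> + t\<^sup>2 * m / 2)) ^ k"
    by (intro mult_left_mono power_mono mgf0 integral_nonneg_AE) auto
  also have "\<dots> = exp (t * x + real k * (- t * \<mu> + t\<^sup>2 * m / 2))"
    by (simp add: exp_of_nat_mult[symmetric] exp_add)
  finally show ?thesis by (simp add: \<mu>_def m_def)
qed

lemma event_sub:
  fixes X :: "nat \<Rightarrow> 'a \<Rightarrow> real"
  assumes nn: "\<And>n. X n \<omega> \<ge> 0" and x: "0 \<le> x" and u: "0 \<le> u" and mu: "\<mu> > 0"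
    and ev: "ereal_of_enat (renewal_count X x \<omega>) - ereal (x / \<mu>) > ereal u"
  shows "(\<Sum>n<nat \<lfloor>x / \<mu> + u\<rfloor> + 1. X n \<omega>) \<le> x"
proof (rule ccontr)
  define k where "k = nat \<lfloor>x / \<mu> + u\<rfloor> + 1"
  assume "\<not> (\<Sum>n<nat \<lfloor>x / \<mu> + u\<rfloor> + 1. X n \<omega>) \<le> x"
  then have Sk: "(\<Sum>n<k. X n \<omega>) > x" by (simp add: k_def)
  have "renewal_count X x \<omega> \<le> enat (k - 1)"
    unfolding renewal_count_def
  proof (rule SUP_least)
    fix j assume "j \<in> {k. (\<Sum>n<k. X n \<omega>) \<le> x}"
    then have Sj: "(\<Sum>n<j. X n \<omega>) \<le> x" by simp
    have "j < k"
    proof (rule ccontr)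
      assume "\<not> j < k"
      then have "(\<Sum>n<k. X n \<omega>) \<le> (\<Sum>n<j. X n \<omega>)"
        by (intro sum_mono2) (auto intro: nn)
      with Sj Sk show False by linarith
    qed
    then show "enat j \<le> enat (k - 1)" by simp
  qed
  then have "ereal_of_enat (renewal_count X x \<omega>) \<le> ereal_of_enat (enat (k - 1))"
    by (simp only: ereal_of_enat_le_iff)
  also have "\<dots> = ereal (real (nat \<lfloor>x / \<mu> + u\<rfloor>))" by (simp add: k_def)
  finally have le: "ereal_of_enat (renewal_count X x \<omega>) \<le> ereal (real (nat \<lfloor>x / \<mu> + u\<rfloor>))" .
  have "real (nat \<lfloor>x / \<mu> + u\<rfloor>) \<le> x / \<mu> + u"
    using x u mu by (simp add: of_nat_nat)
  then have "ereal_of_enat (renewal_count X x \<omega>) - ereal (x / \<mu>) \<le> ereal u"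
    using le by (smt (verit) ereal_minus(1) ereal_minus_mono order_trans ereal_less_eq(3))
  with ev show False by simp
qed

theorem lemmaA9:
  fixes M :: "'a measure" and X :: "nat \<Rightarrow> 'a \<Rightarrow> real"
  assumes "prob_space M"
    and meas: "\<And>n. X n \<in> borel_measurable M"
    and indep: "prob_space.indep_vars M (\<lambda>_. borel) X UNIV"
    and ident: "\<And>n. distr M borel (X n) = distr M borel (X 0)"
    and nonneg: "\<And>n \<omega>. \<omega> \<in> space M \<Longrightarrow> X n \<omega> \<ge> 0"
    and mean_pos: "integral\<^sup>L M (X 0) > 0"
    and second_moment: "integrable M (\<lambda>\<omega>. (X 0 \<omega>)\<^sup>2)"
  shows "\<forall>\<delta>>0. \<exists>C>0. \<exists>c>0. \<forall>x u. 0 \<le> x \<longrightarrow> 0 \<le> u \<longrightarrow> u \<le> \<delta> * x \<longrightarrow>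
           measure M {\<omega> \<in> space M.
              ereal_of_enat (renewal_count X x \<omega>) - ereal (x / integral\<^sup>L M (X 0)) > ereal u}
           \<le> C * exp (- c * u\<^sup>2 / x)"
proof (intro allI impI)
  interpret prob_space M by fact
  note [measurable] = meas
  fix \<delta> :: real assume \<delta>: "\<delta> > 0"
  define \<mu> where "\<mu> = integral\<^sup>L M (X 0)"
  define m where "m = integral\<^sup>L M (\<lambda>\<omega>. (X 0 \<omega>)\<^sup>2) + 1"
  have mu: "\<mu> > 0" using mean_pos by (simp add: \<mu>_def)
  have m: "m \<ge> 1" unfolding m_def by (simp add: integral_nonneg_AE)
  define A where "A = 1 / \<mu> + \<delta> + 1"
  have A: "A > 0" using mu \<delta> unfolding A_def by (smt (verit) divide_pos_pos)
  define c where "c = \<mu>\<^sup>2 / (2 * m * A)"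
  define C where "C = exp (c * \<delta>\<^sup>2)"
  have c: "c > 0" using mu m A by (simp add: c_def)
  have C1: "C \<ge> 1" using c \<delta> by (simp add: C_def)
  show "\<exists>C>0. \<exists>c>0. \<forall>x u. 0 \<le> x \<longrightarrow> 0 \<le> u \<longrightarrow> u \<le> \<delta> * x \<longrightarrow>
           measure M {\<omega> \<in> space M.
              ereal_of_enat (renewal_count X x \<omega>) - ereal (x / integral\<^sup>L M (X 0)) > ereal u}
           \<le> C * exp (- c * u\<^sup>2 / x)"
  proof (intro exI conjI allI impI)
    show "C > 0" using C1 by simp
    show "c > 0" by fact
    fix x u :: real assume x: "0 \<le> x" and u: "0 \<le> u" and ux: "u \<le> \<delta> * x"
    let ?E = "{\<omega> \<in> space M.
              ereal_of_enat (renewal_count X x \<omega>) - ereal (x / integral\<^sup>L M (X 0)) > ereal u}"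
    show "measure M ?E \<le> C * exp (- c * u\<^sup>2 / x)"
    proof (cases "x < 1")
      case True
      have "c * u\<^sup>2 / x \<le> c * \<delta>\<^sup>2"
      proof (cases "x = 0")
        case True then show ?thesis using c \<delta> by simp
      next
        case False
        then have xp: "x > 0" using x by simp
        have "u\<^sup>2 \<le> (\<delta> * x)\<^sup>2" using u ux by (intro power_mono) auto
        then have "u\<^sup>2 / x \<le> \<delta>\<^sup>2 * x" using xp by (simp add: field_simps power2_eq_square)
        also have "\<dots> \<le> \<delta>\<^sup>2" using True x by (simp add: mult_left_le)
        finally show ?thesis using c by (simp add: mult_left_mono divide_inverse mult.assoc)
      qed
      then have "1 \<le> C * exp (- c * u\<^sup>2 / x)"
        by (simp add: C_def exp_add[symmetric])
      then show ?thesis using prob_le_1 by (rule order_trans[rotated])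
    next
      case False
      then have x1: "x \<ge> 1" by simp
      define k where "k = nat \<lfloor>x / \<mu> + u\<rfloor> + 1"
      have kgt: "real k > x / \<mu> + u"
        unfolding k_def using x u mu by (simp add: of_nat_nat) linarith
      have kle: "real k \<le> x / \<mu> + u + 1"
        unfolding k_def using x u mu by (simp add: of_nat_nat)
      have kA: "real k \<le> A * x"
      proof -
        have "real k \<le> x / \<mu> + \<delta> * x + x" using kle ux x1 by linarith
        also have "\<dots> = A * x" by (simp add: A_def algebra_simps)
        finally show ?thesis .
      qed
      have kpos: "real k > 0" by (simp add: k_def)
      define D where "D = real k * \<mu> - x"
      have D: "D \<ge> u * \<mu>"
      proof -
        have "real k * \<mu> > (x / \<mu> + u) * \<mu>" using kgt mu by simp
        then show ?thesis using mu by (simp add: D_def algebra_simps)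
      qed
      have D0: "D \<ge> 0" using D u mu by (smt (verit) mult_nonneg_nonneg)
      define t where "t = D / (real k * m)"
      have t: "t \<ge> 0" using D0 kpos m by (simp add: t_def)
      have sub: "?E \<subseteq> {\<omega> \<in> space M. (\<Sum>n<k. X n \<omega>) \<le> x}"
        using event_sub[of X _ x u \<mu>] nonneg x u mu by (auto simp: k_def \<mu>_def)
      have "measure M ?E \<le> measure M {\<omega> \<in> space M. (\<Sum>n<k. X n \<omega>) \<le> x}"
        by (rule finite_measure_mono[OF sub]) measurable
      also have "\<dots> \<le> exp (t * x + real k * (- t * \<mu> + t\<^sup>2 * m / 2))"
        using chernoff[OF \<open>prob_space M\<close> meas indep ident nonneg second_moment t, of k x]
        by (simp add: \<mu>_def m_def)
      also have "t * x + real k * (- t * \<mu> + t\<^sup>2 * m / 2) = - D\<^sup>2 / (2 * real k * m)"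
        using kpos m by (simp add: t_def D_def field_simps power2_eq_square)
      also have "- D\<^sup>2 / (2 * real k * m) \<le> - c * u\<^sup>2 / x"
      proof -
        have "(u * \<mu>)\<^sup>2 \<le> D\<^sup>2" using D u mu by (intro power_mono) auto
        have "c * u\<^sup>2 / x = (u * \<mu>)\<^sup>2 / (2 * m * (A * x))"
          by (simp add: c_def power_mult_distrib field_simps)
        also have "\<dots> \<le> D\<^sup>2 / (2 * m * (A * x))"
          using \<open>(u * \<mu>)\<^sup>2 \<le> D\<^sup>2\<close> A m x1 by (intro divide_right_mono) auto
        also have "\<dots> \<le> D\<^sup>2 / (2 * m * real k)"
          using kA kpos m A x1 by (intro divide_left_mono mult_left_mono) (auto intro!: mult_pos_pos)
        finally show ?thesis by (simp add: mult.commute mult.left_commute)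
      qed
      also have "exp (- c * u\<^sup>2 / x) \<le> C * exp (- c * u\<^sup>2 / x)"
        using C1 by simp
      finally show ?thesis by simp
    qed
  qed
qed

end
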